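(* Let $0<p<1$ and let $\{a_n\}_{n\geq 0}$ be a sequence of non-negative real numbers such that $\{a^p_n\}_{n\geq 0}$ converges to a finite limit $a\in\mathbb{R}$. Then $\left\{\frac{1}{n+1}a^y_n(p)\right\}_{n\geq 0}$ converges to $0$, where $$a^y_n(p)=\sum_{i=\lfloor pn-\epsilon(n)\rfloor+1}^{\lfloor pn+\epsilon(n)\rfloor-1}w_n^i(p)\, a_i.$$
   Context: $a^p_n=\sum_{i=0}^n\binom{n}{i}p^i(1-p)^{n-i}a_i$. For $0<p<1$, $n\in\mathbb{N}$ and integer $i\ge0$, $w_n^i(p)=\sum_{j=i}^n\binom{j}{i}p^i(1-p)^{j-i}$ (an empty sum, i.e. $0$, if $i>n$). $\epsilon(n)=\sqrt{n}\log n$ for $n\geq2$ and $\epsilon(n)=1$ otherwise. *)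

theory Defs
  imports Complex_Main
begin

definition binom_trans :: "real \<Rightarrow> (nat \<Rightarrow> real) \<Rightarrow> nat \<Rightarrow> real" where
  "binom_trans p a n = (\<Sum>i=0..n. real (n choose i) * p ^ i * (1 - p) ^ (n - i) * a i)"

definition w :: "real \<Rightarrow> nat \<Rightarrow> nat \<Rightarrow> real" where
  "w p n i = (\<Sum>j=i..n. real (j choose i) * p ^ i * (1 - p) ^ (j - i))"

definition eps :: "nat \<Rightarrow> real" where
  "eps n = (if n \<ge> 2 then sqrt (real n) * ln (real n) else 1)"

text \<open>a^y_n(p): sum of w_n^i(p) a_i over the integers i (with i >= 0, since a_i is
  only defined there) in the range floor(pn - eps n)+1 .. floor(pn + eps n)-1.\<close>
definition ay :: "real \<Rightarrow> (nat \<Rightarrow> real) \<Rightarrow> nat \<Rightarrow> real" where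
  "ay p a n = (\<Sum>i\<in>{i::nat. \<lfloor>p * real n - eps n\<rfloor> + 1 \<le> int i
                              \<and> int i \<le> \<lfloor>p * real n + eps n\<rfloor> - 1}. w p n i * a i)"

end

theory Submission
  imports Defs "HOL-Probability.Probability" "HOL-Real_Asymp.Real_Asymp"
begin

lemma exp_m2: "exp (-2::real) \<le> 1/4"
proof -
  have "exp (1::real) \<ge> 2" using exp_ge_add_one_self[of 1] by simp
  hence "exp (1::real) * exp 1 \<ge> 2 * 2" by (intro mult_mono) auto
  hence "exp (2::real) \<ge> 4" using exp_add[of "1::real" 1] by simp
  thus ?thesis by (simp add: exp_minus field_simps)
qed

lemma nb_conc:
  fixes p t :: real and m :: nat
  assumes p: "0 < p" "p < 1" and t: "t > 0"
    and cond: "2 * p^3 * t^2 / (real m + p*t) \<ge> 2"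
  shows "(\<Sum>x\<in>{x::nat. \<bar>real x - real m*(1-p)/p\<bar> < t}. pmf (neg_binomial_pmf m p) x) \<ge> 1/2"
proof -
  define M where "M = neg_binomial_pmf m p"
  define \<mu> where "\<mu> = real m*(1-p)/p"
  define A where "A = {x::nat. \<bar>real x - \<mu>\<bar> < t}"
  define L where "L = {x::nat. real x \<le> \<mu> - t}"
  define U where "U = {x::nat. \<mu> + t \<le> real x}"
  have finA: "finite A"
  proof (rule finite_subset)
    show "A \<subseteq> {..nat \<lceil>\<mu> + t\<rceil>}" unfolding A_def by (auto simp: abs_less_iff) linarith
  qed auto
  have pin: "p \<in> {0<..<1}" using p by auto
  have e2: "exp (- 2 * p ^ 3 * t\<^sup>2 / (real m + p * t)) \<le> 1/4"
  proof -
    have "- 2 * p ^ 3 * t\<^sup>2 / (real m + p * t) \<le> -2" using cond by simp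
    hence "exp (- 2 * p ^ 3 * t\<^sup>2 / (real m + p * t)) \<le> exp (-2)" by simp
    thus ?thesis using exp_m2 by linarith
  qed
  have PU: "measure_pmf.prob M U \<le> 1/4"
    using prob_neg_binomial_pmf_ge_bound[OF pin, of t m] t e2
    unfolding M_def U_def \<mu>_def by simp
  have PL: "measure_pmf.prob M L \<le> 1/4"
  proof (cases "real m - p * t \<le> 0")
    case True
    have "real m * (1-p) < p * t"
    proof (cases "m = 0")
      case True thus ?thesis using p t by simp
    next
      case False
      hence "real m * (1-p) < real m" using p by simp
      thus ?thesis using \<open>real m - p * t \<le> 0\<close> by linarith
    qed
    hence "\<mu> - t < 0" unfolding \<mu>_def using p t
      by (simp add: field_simps)
    hence "L = {}" unfolding L_def by auto
    thus ?thesis by simp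
  next
    case False
    have "- 2 * p ^ 3 * t\<^sup>2 / (real m - p * t) \<le> - 2 * p ^ 3 * t\<^sup>2 / (real m + p * t)"
    proof -
      have "2 * p ^ 3 * t\<^sup>2 / (real m + p * t) \<le> 2 * p ^ 3 * t\<^sup>2 / (real m - p * t)"
        using False p t by (intro divide_left_mono) (auto intro!: mult_pos_pos add_nonneg_pos)
      thus ?thesis by simp
    qed
    hence "exp (- 2 * p ^ 3 * t\<^sup>2 / (real m - p * t)) \<le> 1/4" using e2
      by (meson exp_le_cancel_iff order_trans)
    thus ?thesis
      using prob_neg_binomial_pmf_le_bound[OF pin, of t m] t
      unfolding M_def L_def \<mu>_def by simp
  qed
  have "UNIV - A \<subseteq> L \<union> U" unfolding A_def L_def U_def by auto
  hence "measure_pmf.prob M (UNIV - A) \<le> measure_pmf.prob M (L \<union> U)"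
    by (intro measure_pmf.finite_measure_mono) auto
  also have "\<dots> \<le> measure_pmf.prob M L + measure_pmf.prob M U"
    by (intro measure_subadditive) auto
  finally have "measure_pmf.prob M (UNIV - A) \<le> 1/2" using PL PU by simp
  moreover have "measure_pmf.prob M (UNIV - A) = 1 - measure_pmf.prob M A"
    using measure_pmf.prob_compl[of A M] by simp
  ultimately have "measure_pmf.prob M A \<ge> 1/2" by simp
  thus ?thesis using measure_measure_pmf_finite[OF finA, of M]
    unfolding M_def A_def \<mu>_def by simp
qed


lemma pmf_rel:
  assumes "0 < p" "p < 1"
  shows "pmf (neg_binomial_pmf (Suc i) p) x
       = p * (real ((i+x) choose i) * p^i * (1-p)^((i+x)-i))"
proof -
  have "pmf (neg_binomial_pmf (Suc i) p) x = real ((x + Suc i - 1) choose x) * p ^ Suc i * (1 - p) ^ x"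
    using assms by (intro pmf_neg_binomial) auto
  also have "(x + Suc i - 1) choose x = (i+x) choose i"
    using binomial_symmetric[of x "i+x"] by (simp add: add.commute)
  finally show ?thesis by (simp add: algebra_simps)
qed

lemma w_le:
  assumes "0 < p" "p < 1"
  shows "w p n i \<le> 1/p"
proof (cases "i \<le> n")
  case False
  hence "w p n i = 0" unfolding w_def by simp
  thus ?thesis using assms by simp
next
  case True
  have "p * w p n i = (\<Sum>j=i..n. p * (real (j choose i) * p ^ i * (1 - p) ^ (j - i)))"
    unfolding w_def by (simp add: sum_distrib_left)
  also have "\<dots> = (\<Sum>x=0..n-i. p * (real ((i+x) choose i) * p ^ i * (1 - p) ^ ((i+x) - i)))"
    using sum.shift_bounds_cl_nat_ivl[of "\<lambda>j. p * (real (j choose i) * p ^ i * (1 - p) ^ (j - i))" 0 i "n-i"] True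
    by (simp add: add.commute)
  also have "\<dots> = (\<Sum>x=0..n-i. pmf (neg_binomial_pmf (Suc i) p) x)"
    using pmf_rel[OF assms] by simp
  also have "\<dots> = measure_pmf.prob (neg_binomial_pmf (Suc i) p) {0..n-i}"
    by (simp add: measure_measure_pmf_finite)
  also have "\<dots> \<le> 1" by simp
  finally show ?thesis using assms by (simp add: field_simps mult.commute)
qed

definition Wset :: "real \<Rightarrow> nat \<Rightarrow> nat set" where
  "Wset p n = {i::nat. \<lfloor>p * real n - eps n\<rfloor> + 1 \<le> int i \<and> int i \<le> \<lfloor>p * real n + eps n\<rfloor> - 1}"

lemma finite_Wset: "finite (Wset p n)"
  by (rule finite_subset[of _ "{..nat \<lfloor>p * real n + eps n\<rfloor>}"]) (auto simp: Wset_def)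

lemma tri: "\<bar>(x::real) - M\<bar> < a \<Longrightarrow> i + M = D + n \<Longrightarrow> \<bar>D\<bar> < b \<Longrightarrow> rj = i + x \<Longrightarrow> \<bar>rj - n\<bar> < a + b"
  by (simp add: abs_less_iff)

lemma key:
  fixes p :: real and a :: "nat \<Rightarrow> real"
  assumes p: "0 < p" "p < 1" and a: "\<And>n. a n \<ge> 0"
    and epos: "eps n > 0"
    and cond: "p * (eps n)^2 \<ge> real n + 2 * eps n + 1"
  shows "ay p a n \<le> 2 * (\<Sum>j\<in>{n - nat \<lceil>(2*eps n+1)/p\<rceil>..n + nat \<lceil>(2*eps n+1)/p\<rceil>}. binom_trans p a j)"
proof -
  define e where "e = eps n"
  define R where "R = nat \<lceil>(2*e+1)/p\<rceil>"
  define J where "J = {n - R..n + R}"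
  define W where "W = Wset p n"
  define f where "f = (\<lambda>j i. real (j choose i) * p ^ i * (1 - p) ^ (j - i) * a i)"
  define A where "A = (\<lambda>i. {x::nat. \<bar>real x - real (Suc i)*(1-p)/p\<bar> < e/p})"
  have fnn: "f j i \<ge> 0" for j i unfolding f_def using p a by auto
  have finA: "finite (A i)" for i
  proof (rule finite_subset)
    show "A i \<subseteq> {..nat \<lceil>real (Suc i)*(1-p)/p + e/p\<rceil>}" unfolding A_def by (auto simp: abs_less_iff) linarith
  qed auto
  have Wb: "p * real n - e < real i \<and> real i < p * real n + e" if "i \<in> W" for i
  proof -
    from that have h1: "\<lfloor>p * real n - e\<rfloor> < int i" and h2: "int i < \<lfloor>p * real n + e\<rfloor>"
      unfolding W_def Wset_def e_def by auto
    from h1 have "p * real n - e < real i" by (simp add: floor_less_iff)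
    moreover have "real i < p * real n + e"
    proof -
      have "real i < real_of_int \<lfloor>p * real n + e\<rfloor>"
        using h2 by (metis of_int_less_iff of_int_of_nat_eq)
      thus ?thesis using of_int_floor_le[of "p * real n + e"] by linarith
    qed
    ultimately show ?thesis by simp
  qed
  have step1: "w p n i * a i \<le> 2 * (\<Sum>x\<in>A i. f (i+x) i)" if "i \<in> W" for i
  proof -
    have ip: "real i < p * real n + e" using Wb[OF that] by simp
    have "p * real n \<le> real n" using p mult_left_le_one_le[of "real n" p] by simp
    hence c1: "real (Suc i) + e \<le> p * e^2" using cond ip unfolding e_def by simp
    have "2 * p^3 * (e/p)^2 / (real (Suc i) + p*(e/p)) = 2 * (p * e^2) / (real (Suc i) + e)"
      using p by (simp add: field_simps power2_eq_square power3_eq_cube)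
    also have "\<dots> \<ge> 2"
      using c1 epos unfolding e_def[symmetric] by (simp add: field_simps)
    finally have cc: "2 * p^3 * (e/p)^2 / (real (Suc i) + p*(e/p)) \<ge> 2" .
    have half: "(\<Sum>x\<in>A i. pmf (neg_binomial_pmf (Suc i) p) x) \<ge> 1/2"
      unfolding A_def using nb_conc[OF p _ cc] epos p unfolding e_def by simp
    have "(\<Sum>x\<in>A i. f (i+x) i) = (a i / p) * (\<Sum>x\<in>A i. pmf (neg_binomial_pmf (Suc i) p) x)"
      unfolding f_def pmf_rel[OF p] sum_distrib_left using p by (intro sum.cong) auto
    also have "\<dots> \<ge> (a i / p) * (1/2)"
      using half a p by (intro mult_left_mono) auto
    finally have "a i / p \<le> 2 * (\<Sum>x\<in>A i. f (i+x) i)" by simp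
    moreover have "w p n i * a i \<le> (1/p) * a i"
      using w_le[OF p] a by (intro mult_right_mono) auto
    ultimately show ?thesis by simp
  qed
  have sub: "(+) i ` A i \<subseteq> {j\<in>J. i \<le> j}" if "i \<in> W" for i
  proof
    fix j assume "j \<in> (+) i ` A i"
    then obtain x where x: "x \<in> A i" and j: "j = i + x" by auto
    have xb: "\<bar>real x - real (Suc i)*(1-p)/p\<bar> < e/p" using x unfolding A_def by simp
    have eq: "real i + real (Suc i)*(1-p)/p = (real i + 1 - p - p * real n)/p + real n"
      using p by (simp add: field_simps)
    have "\<bar>real i + 1 - p - p * real n\<bar> < e + 1" using Wb[OF that] p by auto
    hence hD: "\<bar>(real i + 1 - p - p * real n)/p\<bar> < (e+1)/p" using p
      by (simp add: abs_divide abs_of_pos divide_strict_right_mono)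
    have "real j = real i + real x" using j by simp
    hence "\<bar>real j - real n\<bar> < e/p + (e+1)/p" using tri[OF xb eq hD] by blast
    also have "e/p + (e+1)/p = (2*e+1)/p" unfolding add_divide_distrib[symmetric] by (simp add: algebra_simps)
    also have "\<dots> \<le> real R" unfolding R_def by linarith
    finally have "\<bar>real j - real n\<bar> < real R" .
    hence "j \<le> n + R" "n - R \<le> j" by linarith+
    thus "j \<in> {j\<in>J. i \<le> j}" unfolding J_def using j by auto
  qed
  have "ay p a n = (\<Sum>i\<in>W. w p n i * a i)" unfolding ay_def W_def Wset_def e_def by simp
  also have "\<dots> \<le> (\<Sum>i\<in>W. 2 * (\<Sum>x\<in>A i. f (i+x) i))" by (intro sum_mono step1)
  also have "\<dots> = 2 * (\<Sum>i\<in>W. (\<Sum>j\<in>(+) i ` A i. f j i))"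
    by (simp add: sum_distrib_left sum.reindex)
  also have "\<dots> \<le> 2 * (\<Sum>i\<in>W. (\<Sum>j\<in>{j\<in>J. i \<le> j}. f j i))"
    using sub fnn by (intro mult_left_mono sum_mono sum_mono2) (auto simp: J_def)
  also have "(\<Sum>i\<in>W. (\<Sum>j\<in>{j\<in>J. i \<le> j}. f j i)) = (\<Sum>j\<in>J. \<Sum>i\<in>{i\<in>W. i \<le> j}. f j i)"
    by (rule sum.swap_restrict) (auto simp: W_def finite_Wset J_def)
  also have "\<dots> \<le> (\<Sum>j\<in>J. \<Sum>i\<in>{0..j}. f j i)"
    using fnn by (intro sum_mono sum_mono2) auto
  also have "\<dots> = (\<Sum>j\<in>J. binom_trans p a j)"
    unfolding binom_trans_def f_def by simp
  finally show ?thesis unfolding J_def R_def e_def by simp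
qed

lemma L1: "(\<lambda>n::nat. (real n + 2*(sqrt (real n)*ln (real n)) + 1)/(real n * (ln (real n))^2)) \<longlonglongrightarrow> 0"
  by real_asymp
lemma L2: "(\<lambda>n::nat. (sqrt (real n)*ln (real n))/(real n + 1)) \<longlonglongrightarrow> 0"
  by real_asymp
lemma L3: "(\<lambda>n::nat. 1/(real n + 1)) \<longlonglongrightarrow> 0"
  by real_asymp

lemma gaux: "(m::real) \<noteq> 0 \<Longrightarrow> (c*(x/m) + d*(1/m))*m = c*x + d"
  by (simp add: field_simps)

theorem lemma8:
  fixes p :: real and a :: "nat \<Rightarrow> real" and L :: real
  assumes "0 < p" and "p < 1"
    and "\<And>n. a n \<ge> 0"
    and "(\<lambda>n. binom_trans p a n) \<longlonglongrightarrow> L"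
  shows "(\<lambda>n. ay p a n / (real n + 1)) \<longlonglongrightarrow> 0"
proof -
  have p: "0 < p" "p < 1" using assms by auto
  have a: "\<And>n. a n \<ge> 0" by fact
  have "Bseq (\<lambda>n. binom_trans p a n)" using assms(4) by (intro convergent_imp_Bseq convergentI)
  then obtain B where B: "B > 0" "\<And>n. norm (binom_trans p a n) \<le> B" by (auto simp: Bseq_def)
  have Bb: "binom_trans p a n \<le> B" for n using B(2)[of n] by simp
  define g where "g = (\<lambda>n::nat. (8*B/p) * ((sqrt (real n)*ln (real n))/(real n + 1)) + (4*B/p + 6*B) * (1/(real n + 1)))"
  have g0: "g \<longlonglongrightarrow> 0" unfolding g_def
    by (intro tendsto_add_zero tendsto_mult_right_zero L2 L3)
  have ev1: "eventually (\<lambda>n::nat. (real n + 2*(sqrt (real n)*ln (real n)) + 1)/(real n * (ln (real n))^2) < p) sequentially"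
    using order_tendstoD(2)[OF L1 p(1)] .
  have ev: "eventually (\<lambda>n. 0 \<le> ay p a n / (real n + 1) \<and> ay p a n / (real n + 1) \<le> g n) sequentially"
    using ev1 eventually_ge_at_top[of 3]
  proof eventually_elim
    case (elim n)
    have n3: "real n \<ge> 3" using elim(2) by simp
    have lnpos: "ln (real n) > 0" using n3 by simp
    have e: "eps n = sqrt (real n)*ln (real n)" unfolding eps_def using elim(2) by simp
    have epos: "eps n > 0" unfolding e using n3 lnpos by simp
    have e2: "(eps n)^2 = real n * (ln (real n))^2" unfolding e
      using n3 by (simp add: power_mult_distrib)
    have den: "real n * (ln (real n))^2 > 0" using n3 lnpos by simp
    have cond: "p * (eps n)^2 \<ge> real n + 2 * eps n + 1"
      using elim(1) den unfolding e2 by (simp add: e divide_less_eq mult.commute)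
    define R where "R = nat \<lceil>(2*eps n+1)/p\<rceil>"
    have k: "ay p a n \<le> 2 * (\<Sum>j\<in>{n - R..n + R}. binom_trans p a j)"
      using key[OF p a epos cond] unfolding R_def .
    have "(\<Sum>j\<in>{n - R..n + R}. binom_trans p a j) \<le> real (card {n - R..n + R}) * B"
      using Bb by (intro sum_bounded_above) auto
    also have "real (card {n - R..n + R}) \<le> 2 * real R + 1" by simp
    hence "real (card {n - R..n + R}) * B \<le> (2 * real R + 1) * B" using B(1)
      by (intro mult_right_mono) auto
    finally have s1: "ay p a n \<le> 2 * ((2 * real R + 1) * B)" using k by linarith
    have "real R \<le> (2*eps n+1)/p + 1"
    proof -
      have "(2*eps n+1)/p \<ge> 0" using epos p by simp
      thus ?thesis unfolding R_def by linarith
    qed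
    hence "2 * real R + 1 \<le> 2 * ((2*eps n+1)/p + 1) + 1" by (intro add_right_mono mult_left_mono) auto
    hence "2 * ((2 * real R + 1) * B) \<le> 2 * ((2 * ((2*eps n+1)/p + 1) + 1) * B)"
      using B(1) by (intro mult_left_mono mult_right_mono) auto
    also have "\<dots> = (8*B/p) * (sqrt (real n)*ln (real n)) + (4*B/p + 6*B)"
      using p unfolding e by (simp add: field_simps)
    also have "\<dots> = g n * (real n + 1)"
    proof -
      have "real n + 1 \<noteq> 0" by simp
      thus ?thesis unfolding g_def by (rule gaux[symmetric])
    qed
    finally have "ay p a n \<le> g n * (real n + 1)" using s1 by linarith
    hence up: "ay p a n / (real n + 1) \<le> g n" by (simp add: divide_le_eq)
    have "ay p a n \<ge> 0" unfolding ay_def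
      using a p unfolding w_def by (intro sum_nonneg mult_nonneg_nonneg) auto
    thus ?case using up by simp
  qed
  show ?thesis
    by (rule tendsto_sandwich[OF _ _ tendsto_const g0])
       (use ev in \<open>auto elim: eventually_mono\<close>)
qed

end
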